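(* If $G=\prod_{i=1}^tK[a_i,b_i]$ with $2\le b_1\le\cdots\le b_t$, then $$\mathrm{IR}(G)\le\frac{b_1}{2b_1-1}\prod_{i=1}^ta_ib_i.$$
   Context: $K[a,b]$ is the balanced complete $b$-partite graph with $b$ parts of size $a$ (vertices adjacent iff in different parts); $\prod$ denotes the direct product of graphs ($(g_1,h_1)\sim(g_2,h_2)$ iff $g_1\sim g_2$ and $h_1\sim h_2$). A set $S$ is irredundant if every $v\in S$ has a private neighbor, i.e. a vertex in $N[v]\setminus N[S\setminus\{v\}]$ (closed neighborhoods). $\mathrm{IR}(G)$ is the maximum size of an irredundant set. *)

theory Defs
  imports Complex_Main
begin

text \<open>A (simple) graph is given by a vertex set V and a symmetric adjacency relation E.\<close>

definition closed_nbhd :: "'v set \<Rightarrow> ('v \<Rightarrow> 'v \<Rightarrow> bool) \<Rightarrow> 'v \<Rightarrow> 'v set" where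
  "closed_nbhd V E v = {u \<in> V. E v u} \<union> {v}"

definition closed_nbhd_set :: "'v set \<Rightarrow> ('v \<Rightarrow> 'v \<Rightarrow> bool) \<Rightarrow> 'v set \<Rightarrow> 'v set" where
  "closed_nbhd_set V E S = (\<Union>v\<in>S. closed_nbhd V E v)"

definition irredundant :: "'v set \<Rightarrow> ('v \<Rightarrow> 'v \<Rightarrow> bool) \<Rightarrow> 'v set \<Rightarrow> bool" where
  "irredundant V E S \<longleftrightarrow> S \<subseteq> V \<and>
     (\<forall>v\<in>S. \<exists>u. u \<in> closed_nbhd V E v - closed_nbhd_set V E (S - {v}))"

definition IR :: "'v set \<Rightarrow> ('v \<Rightarrow> 'v \<Rightarrow> bool) \<Rightarrow> nat" where
  "IR V E = Max {card S | S. irredundant V E S}"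

text \<open>Direct product of K[a_i,b_i], i = 1..t.  A vertex is a function v with
  v i = (x, p) for 1 \<le> i \<le> t, where p < b i is the part and x < a i the position
  inside the part; v i = (0,0) outside 1..t.\<close>

definition prodK_verts :: "nat \<Rightarrow> (nat \<Rightarrow> nat) \<Rightarrow> (nat \<Rightarrow> nat) \<Rightarrow> (nat \<Rightarrow> nat \<times> nat) set" where
  "prodK_verts t a b = {v. (\<forall>i\<in>{1..t}. fst (v i) < a i \<and> snd (v i) < b i)
                           \<and> (\<forall>i. i \<notin> {1..t} \<longrightarrow> v i = (0, 0))}"

definition prodK_adj :: "nat \<Rightarrow> (nat \<Rightarrow> nat \<times> nat) \<Rightarrow> (nat \<Rightarrow> nat \<times> nat) \<Rightarrow> bool" where
  "prodK_adj t v w \<longleftrightarrow> (\<forall>i\<in>{1..t}. snd (v i) \<noteq> snd (w i))"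

end

theory Submission
  imports Defs "HOL-Library.FuncSet"
begin

lemma irr_half:
  assumes fin: "finite V" and irr: "irredundant V E S"
    and sym: "\<And>u v. E u v \<Longrightarrow> E v u"
    and fV: "\<And>v. v \<in> V \<Longrightarrow> f v \<in> V" and finj: "inj_on f V"
    and fE: "\<And>v. v \<in> V \<Longrightarrow> E v (f v) \<and> f v \<noteq> v"
  shows "2 * card S \<le> card V"
proof -
  have SV: "S \<subseteq> V" using irr unfolding irredundant_def by blast
  have "\<forall>s\<in>S. \<exists>u. u \<in> closed_nbhd V E s - closed_nbhd_set V E (S - {s})"
    using irr unfolding irredundant_def by blast
  then obtain p where p: "\<And>s. s \<in> S \<Longrightarrow> p s \<in> closed_nbhd V E s - closed_nbhd_set V E (S - {s})"
    by metis
  define I where "I = {s\<in>S. \<forall>s'\<in>S. s' \<noteq> s \<longrightarrow> \<not> E s' s}"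
  define g where "g s = (if s \<in> I then f s else p s)" for s
  have cn: "\<And>x s. x \<in> closed_nbhd V E s \<longleftrightarrow> (x \<in> V \<and> E s x) \<or> x = s"
    unfolding closed_nbhd_def by blast
  have cns: "\<And>x A. x \<in> closed_nbhd_set V E A \<longleftrightarrow> (\<exists>s\<in>A. x \<in> closed_nbhd V E s)"
    unfolding closed_nbhd_set_def by blast
  have gS: "g ` S \<subseteq> V - S"
  proof
    fix y assume "y \<in> g ` S"
    then obtain s where s: "s \<in> S" "y = g s" by blast
    show "y \<in> V - S"
    proof (cases "s \<in> I")
      case True
      hence y: "y = f s" using s g_def by simp
      have "s \<in> V" using s SV by blast
      hence "f s \<in> V" "E s (f s)" "f s \<noteq> s" using fV fE by auto
      moreover have "f s \<notin> S" using True sym \<open>E s (f s)\<close> \<open>f s \<noteq> s\<close> unfolding I_def by blast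
      ultimately show ?thesis using y by blast
    next
      case False
      hence y: "y = p s" using s g_def by simp
      have ps: "p s \<in> closed_nbhd V E s" "p s \<notin> closed_nbhd_set V E (S - {s})" using p s by auto
      have "s \<in> V" using s SV by blast
      hence "p s \<in> V" using ps(1) unfolding closed_nbhd_def by auto
      moreover have "p s \<notin> S - {s}" using ps(2) cns cn by blast
      moreover have "p s \<noteq> s"
      proof
        assume e: "p s = s"
        have "s \<in> I" unfolding I_def
        proof (safe)
          show "s \<in> S" by fact
        next
          fix s' assume "s' \<in> S" "s' \<noteq> s" "E s' s"
          hence "s \<in> closed_nbhd_set V E (S - {s})" using cns cn \<open>s \<in> V\<close> by blast
          thus False using ps(2) e by simp
        qed
        thus False using False by simp
      qed
      ultimately show ?thesis using y by blast
    qed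
  qed
  have ginj: "inj_on g S"
  proof (rule inj_onI)
    fix s s' assume s: "s \<in> S" "s' \<in> S" "g s = g s'"
    show "s = s'"
    proof (rule ccontr)
      assume ne: "s \<noteq> s'"
      have key: "\<And>x y. x \<in> S \<Longrightarrow> y \<in> S \<Longrightarrow> x \<noteq> y \<Longrightarrow> y \<notin> I \<Longrightarrow> g x = g y \<Longrightarrow> False"
      proof -
        fix x y assume xy: "x \<in> S" "y \<in> S" "x \<noteq> y" "y \<notin> I" "g x = g y"
        have gy: "g y = p y" using xy g_def by simp
        have py: "p y \<notin> closed_nbhd_set V E (S - {y})" using p xy by auto
        have "g x \<in> closed_nbhd V E x"
        proof (cases "x \<in> I")
          case True
          have "x \<in> V" using xy SV by blast
          thus ?thesis using True g_def fE fV cn by auto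
        next
          case False thus ?thesis using g_def p xy(1) by simp
        qed
        hence "g x \<in> closed_nbhd_set V E (S - {y})" using cns xy by blast
        thus False using py gy xy by simp
      qed
      show False
      proof (cases "s \<in> I \<and> s' \<in> I")
        case True
        hence "f s = f s'" using s g_def by simp
        thus False using finj s SV ne by (meson inj_on_def subsetD)
      next
        case False
        thus False using key s ne by metis
      qed
    qed
  qed
  have "card S \<le> card (V - S)"
    using card_inj_on_le[OF ginj gS] fin by simp
  also have "\<dots> = card V - card S" using card_Diff_subset SV fin finite_subset by metis
  finally have "card S \<le> card V - card S" .
  moreover have "card S \<le> card V" using card_mono fin SV by blast
  ultimately show ?thesis by linarith
qed

lemma mod_step: "(p::nat) < b \<Longrightarrow> q < b \<Longrightarrow> (p+1) mod b = (q+1) mod b \<Longrightarrow> p = q"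
  by (cases "p+1 = b"; cases "q+1 = b") auto

lemma mod_step_ne: "(p::nat) < b \<Longrightarrow> 2 \<le> b \<Longrightarrow> (p+1) mod b \<noteq> p"
  by (cases "p+1 = b") auto

theorem theorem5p8:
  fixes t :: nat and a b :: "nat \<Rightarrow> nat"
  assumes "t \<ge> 1"
    and "\<forall>i\<in>{1..t}. a i \<ge> 1"
    and "2 \<le> b 1"
    and "\<forall>i j. 1 \<le> i \<and> i \<le> j \<and> j \<le> t \<longrightarrow> b i \<le> b j"
  shows "real (IR (prodK_verts t a b) (prodK_adj t))
           \<le> real (b 1) / (2 * real (b 1) - 1) * (\<Prod>i=1..t. real (a i) * real (b i))"
proof -
  define V where "V = prodK_verts t a b"
  have b2: "\<And>i. i \<in> {1..t} \<Longrightarrow> 2 \<le> b i" using assms(3,4) by fastforce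
  define P where "P = PiE {1..t} (\<lambda>i. {..<a i} \<times> {..<b i})"
  have inj: "inj_on (\<lambda>v. restrict v {1..t}) V"
  proof (rule inj_onI)
    fix v w assume vw: "v \<in> V" "w \<in> V" "restrict v {1..t} = restrict w {1..t}"
    show "v = w"
    proof
      fix i show "v i = w i"
      proof (cases "i \<in> {1..t}")
        case True thus ?thesis using vw(3) by (metis restrict_apply')
      next
        case False thus ?thesis using vw(1,2) unfolding V_def prodK_verts_def by auto
      qed
    qed
  qed
  have img: "(\<lambda>v. restrict v {1..t}) ` V = P"
  proof
    show "(\<lambda>v. restrict v {1..t}) ` V \<subseteq> P"
      unfolding V_def prodK_verts_def P_def by (auto simp: PiE_iff mem_Times_iff)
  next
    show "P \<subseteq> (\<lambda>v. restrict v {1..t}) ` V"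
    proof
      fix g assume g: "g \<in> P"
      define x where "x = (\<lambda>i. if i \<in> {1..t} then g i else (0,0))"
      have "x \<in> V" using g unfolding x_def V_def prodK_verts_def P_def
        by (auto simp: PiE_iff mem_Times_iff)
      moreover have "restrict x {1..t} = g" using g unfolding x_def P_def
        by (auto simp: PiE_iff extensional_def)
      ultimately show "g \<in> (\<lambda>v. restrict v {1..t}) ` V" by blast
    qed
  qed
  have cardV: "card V = (\<Prod>i=1..t. a i * b i)"
  proof -
    have "card V = card P" using card_image[OF inj] img by simp
    also have "\<dots> = (\<Prod>i=1..t. a i * b i)" unfolding P_def
      by (simp add: card_PiE card_cartesian_product)
    finally show ?thesis .
  qed
  have "(\<Prod>i=1..t. a i * b i) \<noteq> 0" 
  proof -
    have "\<forall>i\<in>{1..t}. a i * b i \<noteq> 0"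
    proof
      fix i assume i: "i \<in> {1..t}"
      have "a i \<ge> 1" using assms(2) i by blast
      moreover have "b i \<ge> 2" using b2 i by blast
      ultimately show "a i * b i \<noteq> 0" by simp
    qed
    thus ?thesis by simp
  qed
  hence finV: "finite V" using cardV card.infinite by fastforce
  define f :: "(nat \<Rightarrow> nat \<times> nat) \<Rightarrow> _" where "f v = (\<lambda>i. if i \<in> {1..t} then (fst (v i), (snd (v i) + 1) mod b i) else v i)" for v
  have half: "\<And>S. irredundant V (prodK_adj t) S \<Longrightarrow> 2 * card S \<le> card V"
  proof -
    fix S assume irr: "irredundant V (prodK_adj t) S"
    show "2 * card S \<le> card V"
    proof (rule irr_half[OF finV irr, of f])
      show "\<And>u v. prodK_adj t u v \<Longrightarrow> prodK_adj t v u" unfolding prodK_adj_def by metis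
    next
      fix v assume "v \<in> V"
      thus "f v \<in> V" unfolding V_def prodK_verts_def f_def using b2
        by auto
    next
      show "inj_on f V"
      proof (rule inj_onI)
        fix v w assume vw: "v \<in> V" "w \<in> V" "f v = f w"
        show "v = w"
        proof
          fix i show "v i = w i"
          proof (cases "i \<in> {1..t}")
            case True
            have e: "f v i = f w i" using vw(3) by simp
            hence "fst (v i) = fst (w i)" "(snd (v i) + 1) mod b i = (snd (w i) + 1) mod b i"
              using True unfolding f_def by auto
            moreover have "snd (v i) < b i" "snd (w i) < b i" using vw(1,2) True
              unfolding V_def prodK_verts_def by auto
            ultimately show ?thesis using mod_step by (metis prod.expand)
          next
            case False thus ?thesis using vw(1,2) unfolding V_def prodK_verts_def by auto
          qed
        qed
      qed
    next
      fix v assume v: "v \<in> V"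
      have adj: "prodK_adj t v (f v)" unfolding prodK_adj_def
      proof
        fix i assume i: "i \<in> {1..t}"
        have "snd (v i) < b i" using v i unfolding V_def prodK_verts_def by auto
        moreover have "2 \<le> b i" using b2 i by blast
        ultimately have "(snd (v i) + 1) mod b i \<noteq> snd (v i)" using mod_step_ne by blast
        thus "snd (v i) \<noteq> snd (f v i)" using i unfolding f_def by auto
      qed
      moreover have "f v \<noteq> v"
      proof
        assume "f v = v"
        hence "prodK_adj t v v" using adj by simp
        thus False using assms(1) unfolding prodK_adj_def by auto
      qed
      ultimately show "prodK_adj t v (f v) \<and> f v \<noteq> v" by blast
    qed
  qed
  define M where "M = {card S |S. irredundant V (prodK_adj t) S}"
  have "irredundant V (prodK_adj t) {}" unfolding irredundant_def by simp
  hence Mne: "M \<noteq> {}" unfolding M_def by blast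
  have "M \<subseteq> {..card V}"
    unfolding M_def irredundant_def using card_mono[OF finV] by auto
  hence Mfin: "finite M" using finite_subset by blast
  have "Max M \<in> M" using Max_in[OF Mfin Mne] .
  then obtain S where "Max M = card S" "irredundant V (prodK_adj t) S" unfolding M_def by blast
  hence "2 * Max M \<le> card V" using half by simp
  hence "2 * IR V (prodK_adj t) \<le> card V" unfolding IR_def M_def by simp
  hence r: "real (IR V (prodK_adj t)) \<le> real (card V) / 2" by linarith
  have n: "real (card V) = (\<Prod>i=1..t. real (a i) * real (b i))"
    using cardV by simp
  have B: "1/2 \<le> real (b 1) / (2 * real (b 1) - 1)"
    using assms(3) by (simp add: field_simps)
  have "real (card V) / 2 \<le> real (b 1) / (2 * real (b 1) - 1) * real (card V)"
    using mult_right_mono[OF B, of "real (card V)"] by simp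
  with r have "real (IR V (prodK_adj t)) \<le> real (b 1) / (2 * real (b 1) - 1) * real (card V)"
    by linarith
  hence "real (IR V (prodK_adj t)) \<le> real (b 1) / (2 * real (b 1) - 1) * (\<Prod>i=1..t. real (a i) * real (b i))"
    by (simp only: n)
  thus ?thesis unfolding V_def .
qed

end
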